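(* For $\lambda\in\{1,2\}$, the $\Gamma_2$-contractions $(M_{s_1},M_{s_2})|_{\mathbb A^{(\lambda)}_{\rm triv}(\mathbb D^2)}$ and $(M_{s_1},M_{s_2})|_{\mathbb A^{(\lambda)}_{\rm sign}(\mathbb D^2)}$ are not similar, i.e. there is no bounded invertible operator $X:\mathbb A^{(\lambda)}_{\rm triv}(\mathbb D^2)\to\mathbb A^{(\lambda)}_{\rm sign}(\mathbb D^2)$ with $XM_{s_i}=M_{s_i}X$ for $i=1,2$.
   Context: $s_1=z_1+z_2$, $s_2=z_1z_2$; $\Gamma_2=\{(z_1+z_2,z_1z_2):z\in\overline{\mathbb D}^2\}$ and a $\Gamma_2$-contraction is a commuting pair having $\Gamma_2$ as a spectral set. $\mathbb A^{(2)}(\mathbb D^2)$ is the Bergman space of $\mathbb D^2$ (kernel $\prod_i(1-z_i\bar w_i)^{-2}$) and $\mathbb A^{(1)}(\mathbb D^2)=H^2(\mathbb D^2)$ the Hardy space (kernel $\prod_i(1-z_i\bar w_i)^{-1}$). $\mathbb A^{(\lambda)}_{\rm triv}(\mathbb D^2)$ and $\mathbb A^{(\lambda)}_{\rm sign}(\mathbb D^2)$ are the subspaces of symmetric, respectively antisymmetric, functions under $(z_1,z_2)\mapsto(z_2,z_1)$. *)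

theory Defs
  imports "HOL-Analysis.Analysis"
begin

definition bidisc :: "(complex \<times> complex) set" where
  "bidisc = {z. norm (fst z) < 1 \<and> norm (snd z) < 1}"

text \<open>Norm weights of the space with reproducing kernel prod_i (1 - z_i conj w_i)^(-lam):
  the squared norm of the monomial z1^m z2^n is 1 / (C(m+lam-1,m) * C(n+lam-1,n)).
  lam = 1: Hardy space H^2(D^2); lam = 2: Bergman space of D^2.\<close>
definition wt :: "nat \<Rightarrow> nat \<times> nat \<Rightarrow> real" where
  "wt lam = (\<lambda>(m, n). 1 / (real ((m + lam - 1) choose m) * real ((n + lam - 1) choose n)))"

definition is_coeff :: "nat \<Rightarrow> (complex \<times> complex \<Rightarrow> complex) \<Rightarrow> (nat \<times> nat \<Rightarrow> complex) \<Rightarrow> bool" where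
  "is_coeff lam f a \<longleftrightarrow>
     (\<lambda>k. wt lam k * (cmod (a k))\<^sup>2) summable_on UNIV \<and>
     (\<forall>z \<in> bidisc. ((\<lambda>(m, n). a (m, n) * fst z ^ m * snd z ^ n) has_sum f z) UNIV) \<and>
     (\<forall>z. z \<notin> bidisc \<longrightarrow> f z = 0)"

definition Aspace :: "nat \<Rightarrow> (complex \<times> complex \<Rightarrow> complex) set" where
  "Aspace lam = {f. \<exists>a. is_coeff lam f a}"

definition hnorm :: "nat \<Rightarrow> (complex \<times> complex \<Rightarrow> complex) \<Rightarrow> real" where
  "hnorm lam f = sqrt (infsum (\<lambda>k. wt lam k * (cmod ((SOME a. is_coeff lam f a) k))\<^sup>2) UNIV)"

definition Atriv :: "nat \<Rightarrow> (complex \<times> complex \<Rightarrow> complex) set" where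
  "Atriv lam = {f \<in> Aspace lam. \<forall>z1 z2. f (z2, z1) = f (z1, z2)}"

definition Asign :: "nat \<Rightarrow> (complex \<times> complex \<Rightarrow> complex) set" where
  "Asign lam = {f \<in> Aspace lam. \<forall>z1 z2. f (z2, z1) = - f (z1, z2)}"

definition M_s1 :: "(complex \<times> complex \<Rightarrow> complex) \<Rightarrow> (complex \<times> complex \<Rightarrow> complex)" where
  "M_s1 f = (\<lambda>z. (fst z + snd z) * f z)"

definition M_s2 :: "(complex \<times> complex \<Rightarrow> complex) \<Rightarrow> (complex \<times> complex \<Rightarrow> complex)" where
  "M_s2 f = (\<lambda>z. (fst z * snd z) * f z)"

definition bounded_op :: "nat \<Rightarrow> (complex \<times> complex \<Rightarrow> complex) set \<Rightarrow> (complex \<times> complex \<Rightarrow> complex) set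
    \<Rightarrow> ((complex \<times> complex \<Rightarrow> complex) \<Rightarrow> (complex \<times> complex \<Rightarrow> complex)) \<Rightarrow> bool" where
  "bounded_op lam S T X \<longleftrightarrow>
     (\<forall>f \<in> S. X f \<in> T) \<and>
     (\<forall>f \<in> S. \<forall>g \<in> S. X (\<lambda>z. f z + g z) = (\<lambda>z. X f z + X g z)) \<and>
     (\<forall>f \<in> S. \<forall>c. X (\<lambda>z. c * f z) = (\<lambda>z. c * X f z)) \<and>
     (\<exists>C. \<forall>f \<in> S. hnorm lam (X f) \<le> C * hnorm lam f)"

end

theory Submission
  imports Defs "HOL-Complex_Analysis.Cauchy_Integral_Formula"
begin
lemma wt_sym: "wt lam (n,m) = wt lam (m,n)"
  by (simp add: wt_def mult.commute)

lemma wt_cases: "lam \<in> {1,2} \<Longrightarrow> wt lam (m,n) = 1 / (real (if lam = 1 then 1 else m+1) * real (if lam = 1 then 1 else n+1))"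
  by (auto simp: wt_def)

lemma wt_pos: "lam \<in> {1,2} \<Longrightarrow> 0 < wt lam k"
  by (cases k) (auto simp: wt_cases)

lemma wt_mono: "lam \<in> {1,2} \<Longrightarrow> wt lam (m+i,n+j) \<le> wt lam (m,n)"
  by (auto simp: wt_cases divide_simps intro!: mult_mono)

lemma wt_ratio: "lam \<in> {1,2} \<Longrightarrow> wt lam (m,n) \<le> real ((i+1)*(j+1)) * wt lam (m+i,n+j)"
proof -
  assume lam: "lam \<in> {1,2}"
  have a: "real (m+i+1) \<le> real (i+1) * real (m+1)" by (simp add: algebra_simps)
  have b: "real (n+j+1) \<le> real (j+1) * real (n+1)" by (simp add: algebra_simps)
  have "real (m+i+1) * real (n+j+1) \<le> (real (i+1) * real (m+1)) * (real (j+1) * real (n+1))"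
    by (rule mult_mono[OF a b]) auto
  then show ?thesis using lam
    by (auto simp: wt_cases divide_simps algebra_simps)
qed

lemma wt1: "wt 1 k = 1"
  by (cases k) (simp add: wt_def)
lemma wt2: "wt 2 (m,n) = 1 / (real (m+1) * real (n+1))"
  by (simp add: wt_def)

definition sh :: "nat \<Rightarrow> nat \<Rightarrow> (nat \<times> nat \<Rightarrow> complex) \<Rightarrow> nat \<times> nat \<Rightarrow> complex" where
  "sh i j a = (\<lambda>(m,n). if i \<le> m \<and> j \<le> n then a (m-i, n-j) else 0)"

definition mulz :: "nat \<Rightarrow> nat \<Rightarrow> (complex \<times> complex \<Rightarrow> complex) \<Rightarrow> complex \<times> complex \<Rightarrow> complex" where
  "mulz i j f = (\<lambda>z. fst z ^ i * snd z ^ j * f z)"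

lemma coeff_mul:
  assumes lam: "lam \<in> {1,2}" and f: "is_coeff lam f a"
  shows "is_coeff lam (mulz i j f) (sh i j a)"
proof -
  define \<phi> where "\<phi> = (\<lambda>(m::nat,n::nat). (m+i, n+j))"
  have inj: "inj \<phi>" by (auto simp: \<phi>_def inj_def)
  have rng: "\<And>m n. i \<le> m \<Longrightarrow> j \<le> n \<Longrightarrow> (m,n) \<in> range \<phi>"
  proof -
    fix m n assume "i \<le> m" "j \<le> n"
    then have "(m,n) = \<phi> (m-i, n-j)" by (simp add: \<phi>_def)
    then show "(m,n) \<in> range \<phi>" by blast
  qed
  have S: "(\<lambda>k. wt lam k * (cmod (a k))\<^sup>2) summable_on UNIV" using f by (simp add: is_coeff_def)
  have 1: "((\<lambda>k. wt lam k * (cmod (sh i j a k))\<^sup>2) \<circ> \<phi>) summable_on UNIV"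
  proof (rule summable_on_comparison_test[OF S])
    fix x :: "nat \<times> nat"
    obtain m n where x: "x = (m,n)" by (cases x)
    show "((\<lambda>k. wt lam k * (cmod (sh i j a k))\<^sup>2) \<circ> \<phi>) x \<le> wt lam x * (cmod (a x))\<^sup>2"
      using wt_mono[OF lam, of m i n j] by (simp add: x \<phi>_def sh_def mult_right_mono)
    show "0 \<le> ((\<lambda>k. wt lam k * (cmod (sh i j a k))\<^sup>2) \<circ> \<phi>) x"
      using wt_pos[OF lam] by (simp add: less_imp_le)
  qed
  have 2: "(\<lambda>k. wt lam k * (cmod (sh i j a k))\<^sup>2) summable_on UNIV"
  proof -
    have "(\<lambda>k. wt lam k * (cmod (sh i j a k))\<^sup>2) summable_on range \<phi>"
      using 1 summable_on_reindex[OF inj] by blast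
    moreover have "\<And>x. x \<in> UNIV - range \<phi> \<Longrightarrow> wt lam x * (cmod (sh i j a x))\<^sup>2 = 0"
      using rng by (auto simp: sh_def split: prod.splits)
    ultimately show ?thesis
      by (intro summable_on_cong_neutral[where S="range \<phi>" and T=UNIV, THEN iffD1]) auto
  qed
  have 3: "((\<lambda>(m, n). sh i j a (m, n) * fst z ^ m * snd z ^ n) has_sum mulz i j f z) UNIV"
    if z: "z \<in> bidisc" for z
  proof -
    have h: "((\<lambda>(m, n). a (m, n) * fst z ^ m * snd z ^ n) has_sum f z) UNIV"
      using f z by (simp add: is_coeff_def)
    have "((\<lambda>k. (fst z ^ i * snd z ^ j) * (\<lambda>(m, n). a (m, n) * fst z ^ m * snd z ^ n) k) has_sum (fst z ^ i * snd z ^ j) * f z) UNIV"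
      by (rule has_sum_cmult_right[OF h])
    then have "(((\<lambda>(m, n). sh i j a (m, n) * fst z ^ m * snd z ^ n) \<circ> \<phi>) has_sum mulz i j f z) UNIV"
      by (simp add: mulz_def \<phi>_def sh_def o_def case_prod_beta power_add algebra_simps)
    then have "((\<lambda>(m, n). sh i j a (m, n) * fst z ^ m * snd z ^ n) has_sum mulz i j f z) (range \<phi>)"
      using has_sum_reindex[OF inj] by blast
    moreover have "\<And>x. x \<in> UNIV - range \<phi> \<Longrightarrow> (\<lambda>(m, n). sh i j a (m, n) * fst z ^ m * snd z ^ n) x = 0"
      using rng by (auto simp: sh_def split: prod.splits)
    ultimately show ?thesis
      by (intro has_sum_cong_neutral[where S="range \<phi>" and T=UNIV, THEN iffD1]) auto
  qed
  show ?thesis using 2 3 f by (auto simp: is_coeff_def mulz_def)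
qed

lemma coeff_add:
  assumes f: "is_coeff lam f a" and g: "is_coeff lam g b"
  shows "is_coeff lam (\<lambda>z. f z + g z) (\<lambda>k. a k + b k)"
proof -
  have S: "(\<lambda>k. 2 * (wt lam k * (cmod (a k))\<^sup>2) + 2 * (wt lam k * (cmod (b k))\<^sup>2)) summable_on UNIV"
    using f g by (intro summable_on_add summable_on_cmult_right) (auto simp: is_coeff_def)
  have 1: "(\<lambda>k. wt lam k * (cmod (a k + b k))\<^sup>2) summable_on UNIV"
  proof (rule summable_on_comparison_test[OF S])
    fix k
    have w: "0 \<le> wt lam k" by (cases k) (simp add: wt_def)
    have "cmod (a k + b k) \<le> cmod (a k) + cmod (b k)" by (rule norm_triangle_ineq)
    then have "(cmod (a k + b k))\<^sup>2 \<le> (cmod (a k) + cmod (b k))\<^sup>2"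
      by (simp add: power_mono)
    also have "\<dots> \<le> 2 * (cmod (a k))\<^sup>2 + 2 * (cmod (b k))\<^sup>2"
      by (smt (verit) sum_squares_bound power2_sum)
    finally have "(cmod (a k + b k))\<^sup>2 \<le> 2 * (cmod (a k))\<^sup>2 + 2 * (cmod (b k))\<^sup>2" .
    then show "wt lam k * (cmod (a k + b k))\<^sup>2 \<le> 2 * (wt lam k * (cmod (a k))\<^sup>2) + 2 * (wt lam k * (cmod (b k))\<^sup>2)"
      using w by (metis (no_types, opaque_lifting) distrib_left mult.left_commute mult_left_mono)
    show "0 \<le> wt lam k * (cmod (a k + b k))\<^sup>2" using w by simp
  qed
  have 2: "((\<lambda>(m, n). (a (m,n) + b (m,n)) * fst z ^ m * snd z ^ n) has_sum (f z + g z)) UNIV"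
    if z: "z \<in> bidisc" for z
  proof -
    have eq: "(\<lambda>(m, n). (a (m,n) + b (m,n)) * fst z ^ m * snd z ^ n) = (\<lambda>x. (\<lambda>(m, n). a (m, n) * fst z ^ m * snd z ^ n) x + (\<lambda>(m, n). b (m, n) * fst z ^ m * snd z ^ n) x)"
      by (auto simp: fun_eq_iff algebra_simps)
    show ?thesis unfolding eq
      using f g z by (intro has_sum_add) (auto simp: is_coeff_def)
  qed
  show ?thesis using 1 2 f g by (auto simp: is_coeff_def)
qed

lemma coeff_scale:
  assumes f: "is_coeff lam f a"
  shows "is_coeff lam (\<lambda>z. c * f z) (\<lambda>k. c * a k)"
proof -
  have 1: "(\<lambda>k. wt lam k * (cmod (c * a k))\<^sup>2) summable_on UNIV"
  proof -
    have "(\<lambda>k. (cmod c)\<^sup>2 * (wt lam k * (cmod (a k))\<^sup>2)) summable_on UNIV"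
      using f by (intro summable_on_cmult_right) (auto simp: is_coeff_def)
    then show ?thesis by (simp add: norm_mult power_mult_distrib algebra_simps)
  qed
  have 2: "((\<lambda>(m, n). (c * a (m,n)) * fst z ^ m * snd z ^ n) has_sum (c * f z)) UNIV"
    if z: "z \<in> bidisc" for z
  proof -
    have eq: "(\<lambda>(m, n). (c * a (m,n)) * fst z ^ m * snd z ^ n) = (\<lambda>x. c * (\<lambda>(m, n). a (m, n) * fst z ^ m * snd z ^ n) x)"
      by (auto simp: fun_eq_iff algebra_simps)
    show ?thesis unfolding eq
      using f z by (intro has_sum_cmult_right) (auto simp: is_coeff_def)
  qed
  show ?thesis using 1 2 f by (auto simp: is_coeff_def)
qed

lemma coeff_at0:
  assumes f: "is_coeff lam f a"
  shows "f (0,0) = a (0,0)"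
proof -
  have z: "(0,0) \<in> bidisc" by (simp add: bidisc_def)
  have h: "((\<lambda>(m, n). a (m, n) * fst (0::complex,0::complex) ^ m * snd (0::complex,0::complex) ^ n) has_sum f (0,0)) UNIV"
    using bspec[OF conjunct1[OF conjunct2[OF f[unfolded is_coeff_def]]] z] by simp
  have "((\<lambda>(m, n). a (m, n) * fst (0::complex,0::complex) ^ m * snd (0::complex,0::complex) ^ n) has_sum a (0,0)) {(0,0)}"
    by (simp add: has_sum_finiteI)
  then have "((\<lambda>(m, n). a (m, n) * fst (0::complex,0::complex) ^ m * snd (0::complex,0::complex) ^ n) has_sum a (0,0)) UNIV"
    by (intro has_sum_cong_neutral[where S="{(0,0)}" and T=UNIV, THEN iffD1]) (auto simp: zero_power)
  then show ?thesis using h has_sum_unique by blast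
qed

lemma powser_unique:
  fixes c :: "nat \<Rightarrow> complex"
  assumes sm: "\<And>x. norm x < 1 \<Longrightarrow> (\<lambda>n. c n * x^n) sums 0"
  shows "c m = 0"
proof (rule ccontr)
  assume nz: "c m \<noteq> 0"
  show False
  proof (cases "m = 0")
    case True
    have "c 0 = 0" using sm[of 0] by simp
    then show False using nz True by simp
  next
    case False
    show False
    proof (rule powser_0_nonzero[where r=1 and \<xi>=0 and a=c and f="\<lambda>_. 0" and m=m])
      fix s :: real assume s: "0 < s" and H: "\<And>z::complex. z \<in> cball 0 s - {0} \<Longrightarrow> (\<lambda>_. 0::complex) z \<noteq> 0"
      show False using H[of "complex_of_real s"] s by auto
    qed (use sm nz False in auto)
  qed
qed

lemma coeff_zero_unique:
  assumes H: "\<And>z. z \<in> bidisc \<Longrightarrow> ((\<lambda>(m,n). d (m,n) * fst z ^ m * snd z ^ n) has_sum 0) UNIV"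
  shows "d k = 0"
proof -
  have main: "((\<lambda>n. d (m,n) * w ^ n) has_sum 0) UNIV" if w: "norm w < 1" for w m
  proof -
    define g where "g m = infsum (\<lambda>n. d (m,n) * w ^ n) UNIV" for m
    have sm: "(\<lambda>n. d (m,n) * w ^ n) summable_on UNIV" for m
    proof -
      have z: "(1/2, w) \<in> bidisc" using w by (simp add: bidisc_def)
      have "((\<lambda>(m,n). d (m,n) * (1/2) ^ m * w ^ n) has_sum 0) UNIV" using H[OF z] by simp
      then have "(\<lambda>(x,y). d (x,y) * (1/2) ^ x * w ^ y) summable_on Sigma UNIV (\<lambda>_. UNIV)"
        by (simp add: has_sum_imp_summable)
      from summable_on_SigmaD1[OF this, of m]
      have "(\<lambda>y. d (m,y) * (1/2) ^ m * w ^ y) summable_on UNIV" by simp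
      then have "(\<lambda>y. 2 ^ m * (d (m,y) * (1/2) ^ m * w ^ y)) summable_on UNIV"
        by (rule summable_on_cmult_right)
      moreover have "(\<lambda>y. 2 ^ m * (d (m,y) * (1/2) ^ m * w ^ y)) = (\<lambda>n. d (m,n) * w ^ n)"
        by (auto simp: fun_eq_iff power_one_over field_simps)
      ultimately show ?thesis by simp
    qed
    then have hs: "((\<lambda>n. d (m,n) * w ^ n) has_sum g m) UNIV" for m
      by (simp add: g_def)
    have g0: "g m = 0" for m
    proof (rule powser_unique[of g])
      fix x :: complex assume x: "norm x < 1"
      have z: "(x, w) \<in> bidisc" using w x by (simp add: bidisc_def)
      have A: "((\<lambda>(m,n). d (m,n) * x ^ m * w ^ n) has_sum 0) (Sigma UNIV (\<lambda>_. UNIV))" using H[OF z] by simp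
      have B: "((\<lambda>n. d (m,n) * x ^ m * w ^ n) has_sum x ^ m * g m) UNIV" for m
      proof -
        have "((\<lambda>n. x ^ m * (d (m,n) * w ^ n)) has_sum x ^ m * g m) UNIV"
          by (rule has_sum_cmult_right[OF hs])
        then show ?thesis by (simp add: algebra_simps)
      qed
      have "((\<lambda>m. x ^ m * g m) has_sum 0) UNIV"
        by (rule has_sum_SigmaD[OF A]) (use B in simp)
      then have "(\<lambda>m. x ^ m * g m) sums 0" by (rule has_sum_imp_sums)
      then show "(\<lambda>n. g n * x ^ n) sums 0" by (simp add: mult.commute)
    qed
    show ?thesis using hs g0 by simp
  qed
  obtain m n where k: "k = (m,n)" by (cases k)
  have "d (m,n) = 0"
  proof (rule powser_unique[of "\<lambda>n. d (m,n)"])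
    fix x :: complex assume "norm x < 1"
    then show "(\<lambda>n. d (m,n) * x ^ n) sums 0" using main has_sum_imp_sums by blast
  qed
  then show ?thesis by (simp add: k)
qed

lemma coeff_unique:
  assumes f: "is_coeff lam f a" and g: "is_coeff lam f b"
  shows "a = b"
proof -
  have "(\<lambda>k. a k - b k) k = 0" for k
  proof (rule coeff_zero_unique)
    fix z assume z: "z \<in> bidisc"
    have A: "((\<lambda>(m, n). a (m, n) * fst z ^ m * snd z ^ n) has_sum f z) UNIV" using f z by (simp add: is_coeff_def)
    have B: "((\<lambda>(m, n). b (m, n) * fst z ^ m * snd z ^ n) has_sum f z) UNIV" using g z by (simp add: is_coeff_def)
    have B': "((\<lambda>x. - (\<lambda>(m, n). b (m, n) * fst z ^ m * snd z ^ n) x) has_sum - f z) UNIV"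
      using B by (simp add: has_sum_uminus)
    have "((\<lambda>x. (\<lambda>(m, n). a (m, n) * fst z ^ m * snd z ^ n) x + - (\<lambda>(m, n). b (m, n) * fst z ^ m * snd z ^ n) x) has_sum (f z + - f z)) UNIV"
      by (rule has_sum_add[OF A B'])
    moreover have "(\<lambda>x. (\<lambda>(m, n). a (m, n) * fst z ^ m * snd z ^ n) x + - (\<lambda>(m, n). b (m, n) * fst z ^ m * snd z ^ n) x) = (\<lambda>(m, n). (\<lambda>k. a k - b k) (m, n) * fst z ^ m * snd z ^ n)"
      by (auto simp: fun_eq_iff algebra_simps)
    ultimately show "((\<lambda>(m, n). (\<lambda>k. a k - b k) (m, n) * fst z ^ m * snd z ^ n) has_sum 0) UNIV" by simp
  qed
  then show ?thesis by (auto simp: fun_eq_iff)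
qed

lemma fun_unique:
  assumes f: "is_coeff lam f a" and g: "is_coeff lam g a"
  shows "f = g"
proof
  fix z show "f z = g z"
  proof (cases "z \<in> bidisc")
    case True
    then show ?thesis using f g has_sum_unique by (fastforce simp: is_coeff_def)
  next
    case False
    then show ?thesis using f g by (cases z) (auto simp: is_coeff_def)
  qed
qed

lemma hnorm_eq:
  assumes f: "is_coeff lam f a"
  shows "hnorm lam f = sqrt (infsum (\<lambda>k. wt lam k * (cmod (a k))\<^sup>2) UNIV)"
proof -
  have "is_coeff lam f (SOME a. is_coeff lam f a)" using f by (rule someI[where P="is_coeff lam f"])
  then have "(SOME a. is_coeff lam f a) = a" using f coeff_unique by blast
  then show ?thesis by (simp add: hnorm_def)
qed

lemma bidisc_swap: "(snd z, fst z) \<in> bidisc \<longleftrightarrow> z \<in> bidisc"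
  by (auto simp: bidisc_def)

lemma bij_swap: "bij_betw prod.swap (UNIV :: (nat \<times> nat) set) UNIV"
  by (simp add: bij_betw_def)

lemma coeff_swap:
  assumes f: "is_coeff lam f a"
  shows "is_coeff lam (\<lambda>z. f (snd z, fst z)) (\<lambda>(m,n). a (n,m))"
proof -
  have S: "(\<lambda>k. wt lam k * (cmod (a k))\<^sup>2) summable_on UNIV" using f by (simp add: is_coeff_def)
  have 1: "(\<lambda>k. wt lam k * (cmod ((\<lambda>(m,n). a (n,m)) k))\<^sup>2) summable_on UNIV"
  proof -
    have "(\<lambda>k. (\<lambda>k. wt lam k * (cmod (a k))\<^sup>2) (prod.swap k)) summable_on UNIV"
      by (rule summable_on_reindex_bij_betw[OF bij_swap, THEN iffD2, OF S])
    moreover have "(\<lambda>k. (\<lambda>k. wt lam k * (cmod (a k))\<^sup>2) (prod.swap k)) = (\<lambda>k. wt lam k * (cmod ((\<lambda>(m,n). a (n,m)) k))\<^sup>2)"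
    proof
      fix k :: "nat \<times> nat"
      obtain m n where k: "k = (m,n)" by (cases k)
      show "(\<lambda>k. wt lam k * (cmod (a k))\<^sup>2) (prod.swap k) = wt lam k * (cmod ((\<lambda>(m,n). a (n,m)) k))\<^sup>2"
        by (simp add: k wt_sym[of lam m n])
    qed
    ultimately show ?thesis by simp
  qed
  have 2: "((\<lambda>(m, n). (\<lambda>(m,n). a (n,m)) (m, n) * fst z ^ m * snd z ^ n) has_sum f (snd z, fst z)) UNIV"
    if z: "z \<in> bidisc" for z
  proof -
    have "(snd z, fst z) \<in> bidisc" using z bidisc_swap by blast
    then have h: "((\<lambda>(m, n). a (m, n) * snd z ^ m * fst z ^ n) has_sum f (snd z, fst z)) UNIV"
      using f by (auto simp: is_coeff_def)
    have "((\<lambda>k. (\<lambda>(m, n). a (m, n) * snd z ^ m * fst z ^ n) (prod.swap k)) has_sum f (snd z, fst z)) UNIV"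
      by (rule has_sum_reindex_bij_betw[OF bij_swap, THEN iffD2, OF h])
    moreover have "(\<lambda>k. (\<lambda>(m, n). a (m, n) * snd z ^ m * fst z ^ n) (prod.swap k)) = (\<lambda>(m, n). (\<lambda>(m,n). a (n,m)) (m, n) * fst z ^ m * snd z ^ n)"
      by (auto simp: fun_eq_iff)
    ultimately show ?thesis by simp
  qed
  have 3: "\<forall>z. z \<notin> bidisc \<longrightarrow> f (snd z, fst z) = 0"
  proof (intro allI impI)
    fix z :: "complex \<times> complex" assume "z \<notin> bidisc"
    then have "(snd z, fst z) \<notin> bidisc" using bidisc_swap by blast
    then show "f (snd z, fst z) = 0" using f unfolding is_coeff_def by blast
  qed
  show ?thesis using 1 2 3 unfolding is_coeff_def by blast
qed

lemma coeff_sym: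
  assumes f: "is_coeff lam f a" and sym: "\<And>z1 z2. f (z2, z1) = f (z1, z2)"
  shows "a (n,m) = a (m,n)"
proof -
  have "(\<lambda>z. f (snd z, fst z)) = f" using sym by (auto simp: fun_eq_iff)
  then have "is_coeff lam f (\<lambda>(m,n). a (n,m))" using coeff_swap[OF f] by simp
  then have "(\<lambda>(m,n). a (n,m)) = a" using coeff_unique f by blast
  then show ?thesis by (metis case_prod_conv)
qed

definition wsum :: "nat \<Rightarrow> (nat \<times> nat \<Rightarrow> complex) \<Rightarrow> bool" where
  "wsum lam a \<longleftrightarrow> (\<lambda>k. wt lam k * (cmod (a k))\<^sup>2) summable_on UNIV"

definition psum :: "(nat \<times> nat \<Rightarrow> complex) \<Rightarrow> bool" where
  "psum a \<longleftrightarrow> (\<forall>z \<in> bidisc. (\<lambda>k. norm ((\<lambda>(m,n). a (m,n) * fst z ^ m * snd z ^ n) k)) summable_on UNIV)"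

definition funof :: "(nat \<times> nat \<Rightarrow> complex) \<Rightarrow> complex \<times> complex \<Rightarrow> complex" where
  "funof a = (\<lambda>z. if z \<in> bidisc then infsum (\<lambda>(m,n). a (m,n) * fst z ^ m * snd z ^ n) UNIV else 0)"

lemma coeff_funof:
  assumes "wsum lam a" "psum a"
  shows "is_coeff lam (funof a) a"
proof -
  have "((\<lambda>(m,n). a (m,n) * fst z ^ m * snd z ^ n) has_sum funof a z) UNIV" if z: "z \<in> bidisc" for z
  proof -
    have "(\<lambda>k. norm ((\<lambda>(m,n). a (m,n) * fst z ^ m * snd z ^ n) k)) summable_on UNIV"
      using assms(2) z by (simp add: psum_def)
    then have "(\<lambda>(m,n). a (m,n) * fst z ^ m * snd z ^ n) summable_on UNIV"
      by (rule abs_summable_summable)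
    then show ?thesis using z by (simp add: funof_def)
  qed
  then show ?thesis using assms(1) by (auto simp: is_coeff_def wsum_def funof_def)
qed

lemma funof_sym:
  assumes sym: "\<And>m n. a (n,m) = a (m,n)"
  shows "funof a (z2, z1) = funof a (z1, z2)"
proof -
  have "infsum (\<lambda>(m,n). a (m,n) * z2 ^ m * z1 ^ n) UNIV
      = infsum (\<lambda>k. (\<lambda>(m,n). a (m,n) * z2 ^ m * z1 ^ n) (prod.swap k)) UNIV"
    by (rule infsum_reindex_bij_betw[OF bij_swap, symmetric])
  also have "\<dots> = infsum (\<lambda>(m,n). a (m,n) * z1 ^ m * z2 ^ n) UNIV"
    using sym by (intro infsum_cong) (auto simp: algebra_simps)
  finally show ?thesis using bidisc_swap[of "(z1,z2)"] by (simp add: funof_def)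
qed

lemma coeff_wsum: "is_coeff lam f a \<Longrightarrow> wsum lam a"
  by (simp add: is_coeff_def wsum_def)

lemma dom3:
  assumes lam: "lam \<in> {1,2}"
    and w: "wsum lam a1" "wsum lam a2" "wsum lam a3"
    and p: "psum a1" "psum a2" "psum a3"
    and le: "\<And>k. cmod (b k) \<le> cmod (a1 k) + cmod (a2 k) + cmod (a3 k)"
  shows "wsum lam b" "psum b"
proof -
  have S: "(\<lambda>k. 3 * (wt lam k * (cmod (a1 k))\<^sup>2) + 3 * (wt lam k * (cmod (a2 k))\<^sup>2) + 3 * (wt lam k * (cmod (a3 k))\<^sup>2)) summable_on UNIV"
    using w by (intro summable_on_add summable_on_cmult_right) (auto simp: wsum_def)
  show "wsum lam b" unfolding wsum_def
  proof (rule summable_on_comparison_test[OF S])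
    fix k
    have wp: "0 \<le> wt lam k" using wt_pos[OF lam] less_imp_le by blast
    define x where "x = cmod (a1 k)"
    define y where "y = cmod (a2 k)"
    define u where "u = cmod (a3 k)"
    have "0 \<le> cmod (b k)" by simp
    then have "(cmod (b k))\<^sup>2 \<le> (x + y + u)\<^sup>2" using le[of k] by (simp add: x_def y_def u_def power_mono)
    also have "\<dots> \<le> 3 * x\<^sup>2 + 3 * y\<^sup>2 + 3 * u\<^sup>2"
    proof -
      have e: "(x + y + u)\<^sup>2 = x\<^sup>2 + y\<^sup>2 + u\<^sup>2 + 2*x*y + 2*y*u + 2*x*u"
        by (simp add: power2_eq_square algebra_simps)
      have "2*x*y \<le> x\<^sup>2 + y\<^sup>2" "2*y*u \<le> y\<^sup>2 + u\<^sup>2" "2*x*u \<le> x\<^sup>2 + u\<^sup>2"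
        by (simp_all add: sum_squares_bound)
      then show ?thesis unfolding e by linarith
    qed
    finally have "(cmod (b k))\<^sup>2 \<le> 3 * x\<^sup>2 + 3 * y\<^sup>2 + 3 * u\<^sup>2" .
    from mult_left_mono[OF this wp]
    show "wt lam k * (cmod (b k))\<^sup>2 \<le> 3 * (wt lam k * (cmod (a1 k))\<^sup>2) + 3 * (wt lam k * (cmod (a2 k))\<^sup>2) + 3 * (wt lam k * (cmod (a3 k))\<^sup>2)"
      by (simp add: x_def y_def u_def algebra_simps)
    show "0 \<le> wt lam k * (cmod (b k))\<^sup>2" using wp by simp
  qed
  show "psum b" unfolding psum_def
  proof
    fix z assume z: "z \<in> bidisc"
    define T where "T = (\<lambda>a (m,n). a (m,n) * fst z ^ m * snd z ^ n :: complex)"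
    have S: "(\<lambda>k. norm (T a1 k) + norm (T a2 k) + norm (T a3 k)) summable_on UNIV"
      using p z by (intro summable_on_add) (auto simp: psum_def T_def case_prod_beta)
    have "(\<lambda>k. norm (T b k)) summable_on UNIV"
    proof (rule summable_on_comparison_test[OF S])
      fix k :: "nat \<times> nat"
      obtain m n where k: "k = (m,n)" by (cases k)
      have "norm (T b k) = cmod (b k) * (cmod (fst z) ^ m * cmod (snd z) ^ n)"
        by (simp add: T_def k norm_mult norm_power)
      also have "\<dots> \<le> (cmod (a1 k) + cmod (a2 k) + cmod (a3 k)) * (cmod (fst z) ^ m * cmod (snd z) ^ n)"
        by (rule mult_right_mono[OF le]) simp
      also have "\<dots> = norm (T a1 k) + norm (T a2 k) + norm (T a3 k)"
        by (simp add: T_def k norm_mult norm_power algebra_simps)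
      finally show "norm (T b k) \<le> norm (T a1 k) + norm (T a2 k) + norm (T a3 k)" .
    qed simp
    then show "(\<lambda>k. norm ((\<lambda>(m,n). b (m,n) * fst z ^ m * snd z ^ n) k)) summable_on UNIV"
      by (simp add: T_def case_prod_beta)
  qed
qed

definition dsh :: "nat \<Rightarrow> nat \<Rightarrow> (nat \<times> nat \<Rightarrow> complex) \<Rightarrow> nat \<times> nat \<Rightarrow> complex" where
  "dsh i j a = (\<lambda>(m,n). a (m+i, n+j))"

lemma dsh_wsum:
  assumes lam: "lam \<in> {1,2}" and w: "wsum lam a"
  shows "wsum lam (dsh i j a)"
proof -
  define \<phi> where "\<phi> = (\<lambda>(m::nat,n::nat). (m+i, n+j))"
  have inj: "inj \<phi>" by (auto simp: \<phi>_def inj_def)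
  have "(\<lambda>k. wt lam k * (cmod (a k))\<^sup>2) summable_on range \<phi>"
    using w by (auto simp: wsum_def intro: summable_on_subset_banach)
  then have "((\<lambda>k. wt lam k * (cmod (a k))\<^sup>2) \<circ> \<phi>) summable_on UNIV"
    using summable_on_reindex[OF inj] by blast
  then have S: "(\<lambda>k. real ((i+1)*(j+1)) * ((\<lambda>k. wt lam k * (cmod (a k))\<^sup>2) \<circ> \<phi>) k) summable_on UNIV"
    by (rule summable_on_cmult_right)
  show ?thesis unfolding wsum_def
  proof (rule summable_on_comparison_test[OF S])
    fix k :: "nat \<times> nat"
    obtain m n where k: "k = (m,n)" by (cases k)
    show "wt lam k * (cmod (dsh i j a k))\<^sup>2 \<le> real ((i+1)*(j+1)) * ((\<lambda>k. wt lam k * (cmod (a k))\<^sup>2) \<circ> \<phi>) k"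
      using mult_right_mono[OF wt_ratio[OF lam, of m n i j], of "(cmod (a (m+i,n+j)))\<^sup>2"]
      by (simp add: k dsh_def \<phi>_def)
    show "0 \<le> wt lam k * (cmod (dsh i j a k))\<^sup>2" using wt_pos[OF lam, of k] by simp
  qed
qed

lemma dsh_psum:
  assumes f: "is_coeff lam f a"
  shows "psum (dsh i j a)"
  unfolding psum_def
proof
  fix z assume z: "z \<in> bidisc"
  define r1 where "r1 = (1 + cmod (fst z))/2"
  define r2 where "r2 = (1 + cmod (snd z))/2"
  have n1: "0 \<le> cmod (fst z)" "0 \<le> cmod (snd z)" by simp_all
  have r1: "cmod (fst z) \<le> r1" "r1 < 1" "0 < r1" using z by (auto simp: r1_def bidisc_def add_pos_nonneg)
  have r2: "cmod (snd z) \<le> r2" "r2 < 1" "0 < r2" using z by (auto simp: r2_def bidisc_def add_pos_nonneg)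
  define w where "w = (complex_of_real r1, complex_of_real r2)"
  have wb: "w \<in> bidisc" using r1 r2 by (simp add: w_def bidisc_def)
  define T where "T = (\<lambda>(m,n). a (m,n) * fst w ^ m * snd w ^ n)"
  have "T summable_on UNIV" using f wb unfolding is_coeff_def T_def
    by (auto intro: has_sum_imp_summable)
  then have Tabs: "(\<lambda>k. norm (T k)) summable_on UNIV" using summable_on_iff_abs_summable_on_complex by blast
  define \<phi> where "\<phi> = (\<lambda>(m::nat,n::nat). (m+i, n+j))"
  have inj: "inj \<phi>" by (auto simp: \<phi>_def inj_def)
  have "(\<lambda>k. norm (T k)) summable_on range \<phi>"
    using Tabs by (auto intro: summable_on_subset_banach)
  then have "((\<lambda>k. norm (T k)) \<circ> \<phi>) summable_on UNIV"
    using summable_on_reindex[OF inj] by blast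
  then have S: "(\<lambda>k. ((\<lambda>k. norm (T k)) \<circ> \<phi>) k * (1 / (r1 ^ i * r2 ^ j))) summable_on UNIV"
    by (rule summable_on_cmult_left)
  have "(\<lambda>k. norm ((\<lambda>(m,n). dsh i j a (m,n) * fst z ^ m * snd z ^ n) k)) summable_on UNIV"
  proof (rule summable_on_comparison_test[OF S])
    fix k :: "nat \<times> nat"
    obtain m n where k: "k = (m,n)" by (cases k)
    have "norm ((\<lambda>(m,n). dsh i j a (m,n) * fst z ^ m * snd z ^ n) k) = cmod (a (m+i,n+j)) * (cmod (fst z) ^ m * cmod (snd z) ^ n)"
      by (simp add: k dsh_def norm_mult norm_power)
    also have "\<dots> \<le> cmod (a (m+i,n+j)) * (r1 ^ m * r2 ^ n)"
      using r1 r2 by (intro mult_left_mono mult_mono power_mono) auto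
    also have "\<dots> = ((\<lambda>k. norm (T k)) \<circ> \<phi>) k * (1 / (r1 ^ i * r2 ^ j))"
    proof -
      have A: "((\<lambda>k. norm (T k)) \<circ> \<phi>) k = cmod (a (m+i,n+j)) * (r1 ^ (m+i) * r2 ^ (n+j))"
        using r1 r2 by (simp add: k T_def \<phi>_def w_def norm_mult norm_power)
      have B: "r1 ^ (m+i) * r2 ^ (n+j) * (1 / (r1 ^ i * r2 ^ j)) = r1 ^ m * r2 ^ n"
        using r1 r2 by (simp add: power_add)
      show ?thesis unfolding A using B by (metis mult.assoc times_divide_eq_right)
    qed
    finally show "norm ((\<lambda>(m,n). dsh i j a (m,n) * fst z ^ m * snd z ^ n) k) \<le> ((\<lambda>k. norm (T k)) \<circ> \<phi>) k * (1 / (r1 ^ i * r2 ^ j))" .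
  qed simp
  then show "(\<lambda>k. norm ((\<lambda>(m,n). dsh i j a (m,n) * fst z ^ m * snd z ^ n) k)) summable_on UNIV" by simp
qed

lemma coeff_Ms1:
  assumes lam: "lam \<in> {1,2}" and f: "is_coeff lam f a"
  shows "is_coeff lam (M_s1 f) (\<lambda>k. sh 1 0 a k + sh 0 1 a k)"
proof -
  have "M_s1 f = (\<lambda>z. mulz 1 0 f z + mulz 0 1 f z)"
    by (auto simp: M_s1_def mulz_def fun_eq_iff algebra_simps)
  moreover have "is_coeff lam (\<lambda>z. mulz 1 0 f z + mulz 0 1 f z) (\<lambda>k. sh 1 0 a k + sh 0 1 a k)"
    by (rule coeff_add[OF coeff_mul[OF lam f] coeff_mul[OF lam f]])
  ultimately show ?thesis by simp
qed

lemma coeff_Ms2: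
  assumes lam: "lam \<in> {1,2}" and f: "is_coeff lam f a"
  shows "is_coeff lam (M_s2 f) (sh 1 1 a)"
proof -
  have "M_s2 f = mulz 1 1 f"
    by (auto simp: M_s2_def mulz_def fun_eq_iff algebra_simps)
  then show ?thesis using coeff_mul[OF lam f, of 1 1] by simp
qed

lemma Aspace_iff: "f \<in> Aspace lam \<longleftrightarrow> (\<exists>a. is_coeff lam f a)"
  by (simp add: Aspace_def)

lemma triv_Ms1:
  assumes lam: "lam \<in> {1,2}" and f: "f \<in> Atriv lam"
  shows "M_s1 f \<in> Atriv lam"
proof -
  obtain a where a: "is_coeff lam f a" using f unfolding Atriv_def Aspace_iff by blast
  have "M_s1 f \<in> Aspace lam" using coeff_Ms1[OF lam a] by (auto simp: Aspace_iff)
  moreover have "\<forall>z1 z2. M_s1 f (z2,z1) =  M_s1 f (z1,z2)"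
  proof (intro allI)
    fix z1 z2
    have e: "f (z2,z1) =  f (z1,z2)" using f unfolding Atriv_def by blast
    show "M_s1 f (z2,z1) =  M_s1 f (z1,z2)" unfolding M_s1_def fst_conv snd_conv e by (simp add: algebra_simps)
  qed
  ultimately show ?thesis by (simp add: Atriv_def)
qed

lemma triv_Ms2:
  assumes lam: "lam \<in> {1,2}" and f: "f \<in> Atriv lam"
  shows "M_s2 f \<in> Atriv lam"
proof -
  obtain a where a: "is_coeff lam f a" using f unfolding Atriv_def Aspace_iff by blast
  have "M_s2 f \<in> Aspace lam" using coeff_Ms2[OF lam a] by (auto simp: Aspace_iff)
  moreover have "\<forall>z1 z2. M_s2 f (z2,z1) =  M_s2 f (z1,z2)"
  proof (intro allI)
    fix z1 z2
    have e: "f (z2,z1) =  f (z1,z2)" using f unfolding Atriv_def by blast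
    show "M_s2 f (z2,z1) =  M_s2 f (z1,z2)" unfolding M_s2_def fst_conv snd_conv e by (simp add: algebra_simps)
  qed
  ultimately show ?thesis by (simp add: Atriv_def)
qed


lemma sign_D:
  assumes "f \<in> Asign lam"
  shows "f \<in> Aspace lam" "f (z2,z1) = - f (z1,z2)"
proof -
  have A: "f \<in> Aspace lam \<and> (\<forall>z1 z2. f (z2, z1) = - f (z1, z2))"
    using assms unfolding Asign_def by (rule CollectD)
  then show "f \<in> Aspace lam" by (rule conjunct1)
  show "f (z2,z1) = - f (z1,z2)" using conjunct2[OF A] by (elim allE)
qed

lemma triv_D:
  assumes "f \<in> Atriv lam"
  shows "f \<in> Aspace lam" "f (z2,z1) = f (z1,z2)"
proof -
  have A: "f \<in> Aspace lam \<and> (\<forall>z1 z2. f (z2, z1) = f (z1, z2))"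
    using assms unfolding Atriv_def by (rule CollectD)
  then show "f \<in> Aspace lam" by (rule conjunct1)
  show "f (z2,z1) = f (z1,z2)" using conjunct2[OF A] by (elim allE)
qed

lemma sign_I:
  assumes "f \<in> Aspace lam" "\<And>z1 z2. f (z2,z1) = - f (z1,z2)"
  shows "f \<in> Asign lam"
  using assms unfolding Asign_def by blast

lemma triv_I:
  assumes "f \<in> Aspace lam" "\<And>z1 z2. f (z2,z1) = f (z1,z2)"
  shows "f \<in> Atriv lam"
  using assms unfolding Atriv_def by blast

lemma sign_Ms1:
  assumes lam: "lam \<in> {1,2}" and f: "f \<in> Asign lam"
  shows "M_s1 f \<in> Asign lam"
proof (rule sign_I)
  obtain a where a: "is_coeff lam f a" using sign_D(1)[OF f] unfolding Aspace_iff by blast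
  show "M_s1 f \<in> Aspace lam" using coeff_Ms1[OF lam a] unfolding Aspace_iff by blast
  fix z1 z2
  show "M_s1 f (z2,z1) = - M_s1 f (z1,z2)" unfolding M_s1_def fst_conv snd_conv sign_D(2)[OF f, of z2 z1]
    by (simp add: algebra_simps)
qed

lemma sign_Ms2:
  assumes lam: "lam \<in> {1,2}" and f: "f \<in> Asign lam"
  shows "M_s2 f \<in> Asign lam"
proof (rule sign_I)
  obtain a where a: "is_coeff lam f a" using sign_D(1)[OF f] unfolding Aspace_iff by blast
  show "M_s2 f \<in> Aspace lam" using coeff_Ms2[OF lam a] unfolding Aspace_iff by blast
  fix z1 z2
  show "M_s2 f (z2,z1) = - M_s2 f (z1,z2)" unfolding M_s2_def fst_conv snd_conv sign_D(2)[OF f, of z2 z1]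
    by (simp add: algebra_simps)
qed

lemma sign_scale:
  assumes f: "f \<in> Asign lam"
  shows "(\<lambda>z. c * f z) \<in> Asign lam"
proof (rule sign_I)
  obtain a where a: "is_coeff lam f a" using sign_D(1)[OF f] unfolding Aspace_iff by blast
  show "(\<lambda>z. c * f z) \<in> Aspace lam" using coeff_scale[OF a] unfolding Aspace_iff by blast
  fix z1 z2
  show "c * f (z2,z1) = - (c * f (z1,z2))" unfolding sign_D(2)[OF f, of z2 z1] by simp
qed
definition F1 :: "(nat \<times> nat \<Rightarrow> complex) \<Rightarrow> nat \<times> nat \<Rightarrow> complex" where
  "F1 c = (\<lambda>(m,n). if m = 0 \<and> n = 0 then c (1,0) else if n = 0 then c (m+1,0) else if m = 0 then c (0,n+1) else 0)"

definition F2 :: "(nat \<times> nat \<Rightarrow> complex) \<Rightarrow> nat \<times> nat \<Rightarrow> complex" where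
  "F2 c = (\<lambda>(m,n). c (m+1,n+1) - (if m = 0 \<and> n = 0 then 2 * c (2,0) else if n = 0 then c (m+2,0) else if m = 0 then c (0,n+2) else 0))"

lemma F_ident:
  assumes sym: "\<And>m n. c (n,m) = c (m,n)" and c0: "c (0,0) = 0"
  shows "(\<lambda>k. (sh 1 0 (F1 c) k + sh 0 1 (F1 c) k) + sh 1 1 (F2 c) k) = c"
proof
  fix k :: "nat \<times> nat"
  obtain m n where k: "k = (m,n)" by (cases k)
  have m: "m = 0 \<or> m = 1 \<or> m \<ge> 2" and n: "n = 0 \<or> n = 1 \<or> n \<ge> 2" by auto
  have s: "c (0,2) = c (2,0)" "c (0,1) = c (1,0)" using sym by auto
  show "(sh 1 0 (F1 c) k + sh 0 1 (F1 c) k) + sh 1 1 (F2 c) k = c k"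
    using m n s c0 by (auto simp: k sh_def F1_def F2_def numeral_2_eq_2)
qed

lemma norm_diff_le: "cmod (x - y) \<le> cmod x + cmod y"
  by (rule norm_triangle_ineq4)

lemma division:
  assumes lam: "lam \<in> {1,2}" and h: "h \<in> Atriv lam" and c: "is_coeff lam h c" and c0: "c (0,0) = 0"
  shows "\<exists>f1 f2. f1 \<in> Atriv lam \<and> f2 \<in> Atriv lam \<and> h = (\<lambda>z. M_s1 f1 z + M_s2 f2 z)"
proof -
  have sym: "\<And>m n. c (n,m) = c (m,n)" using coeff_sym[OF c] triv_D(2)[OF h] by blast
  have wd: "wsum lam (dsh i j c)" for i j by (rule dsh_wsum[OF lam coeff_wsum[OF c]])
  have pd: "psum (dsh i j c)" for i j by (rule dsh_psum[OF c])
  have w0: "wsum lam (\<lambda>_. 0)" "psum (\<lambda>_. 0)" by (simp_all add: wsum_def psum_def)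
  have le1: "cmod (F1 c k) \<le> cmod (dsh 1 0 c k) + cmod (dsh 0 1 c k) + cmod ((\<lambda>_. 0::complex) k)" for k
    by (cases k) (auto simp: F1_def dsh_def)
  have W1: "wsum lam (F1 c)" "psum (F1 c)"
    using dom3[OF lam wd[of 1 0] wd[of 0 1] w0(1) pd[of 1 0] pd[of 0 1] w0(2) le1] by auto
  have le2: "cmod (F2 c k) \<le> cmod (dsh 1 1 c k) + cmod (dsh 2 0 c k) + cmod (dsh 0 2 c k)" for k
  proof -
    obtain m n where k: "k = (m,n)" by (cases k)
    have s: "c (0,2) = c (2,0)" using sym by auto
    show ?thesis
    proof (cases "m = 0 \<and> n = 0")
      case True
      have "cmod (c (1,1) - 2 * c (2,0)) \<le> cmod (c (1,1)) + cmod (2 * c (2,0))" by (rule norm_diff_le)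
      also have "cmod (2 * c (2,0)) = cmod (c (2,0)) + cmod (c (0,2))" using s by (simp add: norm_mult)
      finally show ?thesis using True by (simp add: k F2_def dsh_def add.assoc numeral_2_eq_2)
    next
      case False
      then show ?thesis
        using norm_diff_le[of "c (m+1,n+1)" "c (m+2,0)"] norm_diff_le[of "c (m+1,n+1)" "c (0,n+2)"]
        by (auto simp: k F2_def dsh_def) (smt (verit) norm_ge_zero)+
    qed
  qed
  have W2: "wsum lam (F2 c)" "psum (F2 c)"
    using dom3[OF lam wd[of 1 1] wd[of 2 0] wd[of 0 2] pd[of 1 1] pd[of 2 0] pd[of 0 2] le2] by auto
  define f1 where "f1 = funof (F1 c)"
  define f2 where "f2 = funof (F2 c)"
  have cf1: "is_coeff lam f1 (F1 c)" using coeff_funof W1 by (simp add: f1_def)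
  have cf2: "is_coeff lam f2 (F2 c)" using coeff_funof W2 by (simp add: f2_def)
  have s1: "F1 c (n,m) = F1 c (m,n)" for m n using sym by (auto simp: F1_def)
  have s2: "F2 c (n,m) = F2 c (m,n)" for m n using sym by (auto simp: F2_def)
  have t1: "f1 \<in> Atriv lam"
  proof (rule triv_I)
    show "f1 \<in> Aspace lam" using cf1 unfolding Aspace_iff by blast
    show "f1 (z2, z1) = f1 (z1, z2)" for z1 z2 unfolding f1_def by (rule funof_sym[of "F1 c", OF s1])
  qed
  have t2: "f2 \<in> Atriv lam"
  proof (rule triv_I)
    show "f2 \<in> Aspace lam" using cf2 unfolding Aspace_iff by blast
    show "f2 (z2, z1) = f2 (z1, z2)" for z1 z2 unfolding f2_def by (rule funof_sym[of "F2 c", OF s2])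
  qed
  have "is_coeff lam (\<lambda>z. M_s1 f1 z + M_s2 f2 z) (\<lambda>k. (sh 1 0 (F1 c) k + sh 0 1 (F1 c) k) + sh 1 1 (F2 c) k)"
    by (rule coeff_add[OF coeff_Ms1[OF lam cf1] coeff_Ms2[OF lam cf2]])
  then have "is_coeff lam (\<lambda>z. M_s1 f1 z + M_s2 f2 z) c" using F_ident[of c, OF sym c0] by simp
  then have "h = (\<lambda>z. M_s1 f1 z + M_s2 f2 z)" using fun_unique c by blast
  then show ?thesis using t1 t2 by blast
qed

lemma harm_le_S:
  assumes lam: "lam \<in> {1,2}"
  shows "\<exists>t>0. harm (n+1) \<le> t * (\<Sum>k\<le>n. wt lam (k, n-k)) \<and> t * (wt lam (n+1,0) + wt lam (0,n+1)) = 2"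
proof (cases "lam = 1")
  case True
  have "harm (n+1) = (\<Sum>k\<le>n. inverse (real (Suc k)))"
    by (simp add: harm_altdef lessThan_Suc_atMost)
  also have "\<dots> \<le> (\<Sum>k\<le>n. 1)"
    by (intro sum_mono) (simp add: field_simps)
  also have "\<dots> = (\<Sum>k\<le>n. wt lam (k, n-k))" unfolding True wt1 by simp
  finally have A: "harm (n+1) \<le> 1 * (\<Sum>k\<le>n. wt lam (k, n-k))" by simp
  have B: "1 * (wt lam (n+1,0) + wt lam (0,n+1)) = 2" unfolding True wt1 by simp
  show ?thesis using A B by (intro exI[of _ 1]) simp
next
  case False
  then have l2: "lam = 2" using lam by auto
  have "harm (n+1) = (\<Sum>k\<le>n. inverse (real (Suc k)))"
    by (simp add: harm_altdef lessThan_Suc_atMost)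
  also have "\<dots> \<le> (\<Sum>k\<le>n. real (n+2) * wt lam (k, n-k))"
  proof (intro sum_mono)
    fix k assume k: "k \<in> {..n}"
    then have kn: "k \<le> n" by simp
    have pos: "0 < real (k+1)" "0 < real (n-k+1)" by simp_all
    have le: "real (n-k+1) \<le> real (n+2)" by simp
    have "inverse (real (Suc k)) = 1 / real (k+1)" by (simp add: field_simps)
    also have "\<dots> = real (n-k+1) / (real (k+1) * real (n-k+1))"
      using pos by simp
    also have "\<dots> \<le> real (n+2) / (real (k+1) * real (n-k+1))"
      by (rule divide_right_mono[OF le]) simp
    also have "\<dots> = real (n+2) * wt lam (k, n-k)" using l2 by (simp add: wt2)
    finally show "inverse (real (Suc k)) \<le> real (n+2) * wt lam (k, n-k)" .
  qed
  also have "\<dots> = real (n+2) * (\<Sum>k\<le>n. wt lam (k, n-k))" by (simp add: sum_distrib_left)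
  finally have A: "harm (n+1) \<le> real (n+2) * (\<Sum>k\<le>n. wt lam (k, n-k))" .
  have B: "real (n+2) * (wt lam (n+1,0) + wt lam (0,n+1)) = 2"
    using l2 by (simp add: wt2 field_simps)
  show ?thesis using A B by (intro exI[of _ "real (n+2)"]) simp
qed

lemma final_contra:
  assumes lam: "lam \<in> {1,2}" and A: "0 < A"
    and H: "\<And>n. A * (\<Sum>k\<le>n. wt lam (k, n-k)) \<le> B * (wt lam (n+1,0) + wt lam (0,n+1))"
  shows False
proof -
  have bound: "A * harm (n+1) \<le> 2 * B" for n
  proof -
    obtain t where t: "t > 0" "harm (n+1) \<le> t * (\<Sum>k\<le>n. wt lam (k, n-k))"
      "t * (wt lam (n+1,0) + wt lam (0,n+1)) = 2"
      using harm_le_S[OF lam, of n] by blast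
    have "A * harm (n+1) \<le> A * (t * (\<Sum>k\<le>n. wt lam (k, n-k)))"
      using t(2) A by (simp add: mult_left_mono)
    also have "\<dots> = t * (A * (\<Sum>k\<le>n. wt lam (k, n-k)))" by (simp add: algebra_simps)
    also have "\<dots> \<le> t * (B * (wt lam (n+1,0) + wt lam (0,n+1)))"
      using H[of n] t(1) by (simp add: mult_left_mono)
    also have "\<dots> = 2 * B" using t(3) by (metis mult.left_commute mult.commute)
    finally show ?thesis .
  qed
  have "eventually (\<lambda>n. 2 * B / A + 1 \<le> harm n) sequentially"
    using harm_at_top by (simp add: filterlim_at_top)
  then obtain N where N: "\<And>n. n \<ge> N \<Longrightarrow> 2 * B / A + 1 \<le> harm n"
    by (auto simp: eventually_sequentially)
  have "2 * B / A + 1 \<le> harm (N+1)" using N by simp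
  moreover have "harm (N+1) \<le> 2 * B / A" using bound[of N] A by (simp add: pos_le_divide_eq mult.commute)
  ultimately show False by linarith
qed

definition one :: "complex \<times> complex \<Rightarrow> complex" where
  "one = (\<lambda>z. if z \<in> bidisc then 1 else 0)"

definition del0 :: "nat \<times> nat \<Rightarrow> complex" where
  "del0 = (\<lambda>k. if k = (0,0) then 1 else 0)"

lemma coeff_one: "is_coeff lam one del0"
proof -
  have 1: "(\<lambda>k. wt lam k * (cmod (del0 k))\<^sup>2) summable_on UNIV"
    by (intro summable_on_cong_neutral[where S="{(0,0)}" and T=UNIV, THEN iffD1]) (auto simp: del0_def)
  have 2: "((\<lambda>(m, n). del0 (m, n) * fst z ^ m * snd z ^ n) has_sum one z) UNIV" if z: "z \<in> bidisc" for z
  proof -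
    have "((\<lambda>(m, n). del0 (m, n) * fst z ^ m * snd z ^ n) has_sum 1) {(0,0)}"
      by (simp add: has_sum_finiteI del0_def)
    then have "((\<lambda>(m, n). del0 (m, n) * fst z ^ m * snd z ^ n) has_sum 1) UNIV"
      by (intro has_sum_cong_neutral[where S="{(0,0)}" and T=UNIV, THEN iffD1]) (auto simp: del0_def split: if_splits)
    then show ?thesis using z by (simp add: one_def)
  qed
  show ?thesis using 1 2 by (auto simp: is_coeff_def one_def)
qed

definition Pn :: "nat \<Rightarrow> complex \<times> complex \<Rightarrow> complex" where
  "Pn n = (\<lambda>z. mulz (n+1) 0 one z + (-1) * mulz 0 (n+1) one z)"

definition pf :: "nat \<Rightarrow> nat \<times> nat \<Rightarrow> complex" where
  "pf n = (\<lambda>k. sh (n+1) 0 del0 k + (-1) * sh 0 (n+1) del0 k)"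

lemma coeff_Pn: "lam \<in> {1,2} \<Longrightarrow> is_coeff lam (Pn n) (pf n)"
  unfolding Pn_def pf_def
  by (rule coeff_add[OF coeff_mul[OF _ coeff_one] coeff_scale[OF coeff_mul[OF _ coeff_one]]])

lemma one_swap: "one (z2, z1) = one (z1, z2)"
  using bidisc_swap[of "(z1,z2)"] by (simp add: one_def)

lemma Pn_sign: "lam \<in> {1,2} \<Longrightarrow> Pn n \<in> Asign lam"
proof (rule sign_I)
  assume "lam \<in> {1,2}"
  then show "Pn n \<in> Aspace lam" using coeff_Pn unfolding Aspace_iff by blast
  fix z1 z2
  show "Pn n (z2, z1) = - Pn n (z1, z2)"
    unfolding Pn_def mulz_def fst_conv snd_conv one_swap[of z1 z2] by (simp add: algebra_simps)
qed

lemma Pn_rec: "Pn (Suc (Suc n)) = (\<lambda>z. M_s1 (Pn (Suc n)) z + (-1) * M_s2 (Pn n) z)"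
  by (auto simp: fun_eq_iff Pn_def mulz_def M_s1_def M_s2_def algebra_simps)

lemma Pn_1: "Pn (Suc 0) = M_s1 (Pn 0)"
  by (auto simp: fun_eq_iff Pn_def mulz_def M_s1_def algebra_simps power2_eq_square)

lemma pf_eq: "pf n k = (if k = (n+1,0) then 1 else if k = (0,n+1) then -1 else 0)"
  by (cases k) (auto simp: pf_def sh_def del0_def)

lemma pf_norm: "infsum (\<lambda>k. wt lam k * (cmod (pf n k))\<^sup>2) UNIV = wt lam (n+1,0) + wt lam (0,n+1)"
proof -
  have "infsum (\<lambda>k. wt lam k * (cmod (pf n k))\<^sup>2) UNIV = infsum (\<lambda>k. wt lam k * (cmod (pf n k))\<^sup>2) {(n+1,0),(0,n+1)}"
    by (rule infsum_cong_neutral) (auto simp: pf_eq)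
  also have "\<dots> = wt lam (n+1,0) + wt lam (0,n+1)" by (simp add: pf_eq)
  finally show ?thesis .
qed

fun fam :: "(nat \<times> nat \<Rightarrow> complex) \<Rightarrow> nat \<Rightarrow> nat \<times> nat \<Rightarrow> complex" where
  "fam c 0 = c"
| "fam c (Suc 0) = (\<lambda>k. sh 1 0 c k + sh 0 1 c k)"
| "fam c (Suc (Suc n)) = (\<lambda>k. (sh 1 0 (fam c (Suc n)) k + sh 0 1 (fam c (Suc n)) k) + (-1) * sh 1 1 (fam c n) k)"

lemma fam_diag: "k + l = n \<Longrightarrow> fam c n (k,l) = c (0,0)"
proof (induction c n arbitrary: k l rule: fam.induct)
  case (1 c)
  then show ?case by simp
next
  case (2 c)
  then show ?case by (cases k) (auto simp: sh_def)
next
  case (3 c n)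
  show ?case
  proof (cases "k = 0")
    case True
    then show ?thesis using "3.IH"(1)[of 0 "l-1"] "3.prems" by (auto simp: sh_def)
  next
    case False
    show ?thesis
    proof (cases "l = 0")
      case True
      then show ?thesis using "3.IH"(1)[of "k-1" 0] "3.prems" False by (auto simp: sh_def)
    next
      case False2: False
      have i1: "fam c (Suc n) (k-1, l) = c (0,0)" by (rule "3.IH") (use "3.prems" False in arith)
      have i2: "fam c (Suc n) (k, l-1) = c (0,0)" by (rule "3.IH") (use "3.prems" False2 in arith)
      have i3: "fam c n (k-1, l-1) = c (0,0)" by (rule "3.IH") (use "3.prems" False False2 in arith)
      show ?thesis using i1 i2 i3 False False2 by (auto simp: sh_def)
    qed
  qed
qed

theorem theorem4p24:
  fixes lam :: nat
  assumes "lam \<in> {1, 2}"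
  shows "\<not> (\<exists>X Y.
      bounded_op lam (Atriv lam) (Asign lam) X \<and>
      bounded_op lam (Asign lam) (Atriv lam) Y \<and>
      (\<forall>f \<in> Atriv lam. Y (X f) = f) \<and>
      (\<forall>g \<in> Asign lam. X (Y g) = g) \<and>
      (\<forall>f \<in> Atriv lam. X (M_s1 f) = M_s1 (X f)) \<and>
      (\<forall>f \<in> Atriv lam. X (M_s2 f) = M_s2 (X f)))"
proof
  have lam: "lam \<in> {1,2}" using assms by simp
  assume "\<exists>X Y.
      bounded_op lam (Atriv lam) (Asign lam) X \<and>
      bounded_op lam (Asign lam) (Atriv lam) Y \<and>
      (\<forall>f \<in> Atriv lam. Y (X f) = f) \<and>
      (\<forall>g \<in> Asign lam. X (Y g) = g) \<and>
      (\<forall>f \<in> Atriv lam. X (M_s1 f) = M_s1 (X f)) \<and>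
      (\<forall>f \<in> Atriv lam. X (M_s2 f) = M_s2 (X f))"
  then obtain X Y where bX: "bounded_op lam (Atriv lam) (Asign lam) X"
    and bY: "bounded_op lam (Asign lam) (Atriv lam) Y"
    and YX: "\<forall>f \<in> Atriv lam. Y (X f) = f"
    and XY: "\<forall>g \<in> Asign lam. X (Y g) = g"
    and c1: "\<forall>f \<in> Atriv lam. X (M_s1 f) = M_s1 (X f)"
    and c2: "\<forall>f \<in> Atriv lam. X (M_s2 f) = M_s2 (X f)"
    by blast
  have Xin: "\<And>f. f \<in> Atriv lam \<Longrightarrow> X f \<in> Asign lam" using bX unfolding bounded_op_def by blast
  have Xadd: "\<And>f g. f \<in> Atriv lam \<Longrightarrow> g \<in> Atriv lam \<Longrightarrow> X (\<lambda>z. f z + g z) = (\<lambda>z. X f z + X g z)"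
    using bX unfolding bounded_op_def by blast
  have Yin: "\<And>f. f \<in> Asign lam \<Longrightarrow> Y f \<in> Atriv lam" using bY unfolding bounded_op_def by blast
  have Yadd: "\<And>f g. f \<in> Asign lam \<Longrightarrow> g \<in> Asign lam \<Longrightarrow> Y (\<lambda>z. f z + g z) = (\<lambda>z. Y f z + Y g z)"
    using bY unfolding bounded_op_def by blast
  have Yscale: "\<And>f c. f \<in> Asign lam \<Longrightarrow> Y (\<lambda>z. c * f z) = (\<lambda>z. c * Y f z)"
    using bY unfolding bounded_op_def by blast
  obtain C where C: "\<And>f. f \<in> Asign lam \<Longrightarrow> hnorm lam (Y f) \<le> C * hnorm lam f"
    using bY unfolding bounded_op_def by blast
  have Ycomm1: "Y (M_s1 g) = M_s1 (Y g)" if g: "g \<in> Asign lam" for g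
  proof -
    have Yg: "Y g \<in> Atriv lam" using Yin g by blast
    have "X (M_s1 (Y g)) = M_s1 (X (Y g))" using c1 Yg by blast
    also have "\<dots> = M_s1 g" using XY g by simp
    finally have "Y (M_s1 g) = Y (X (M_s1 (Y g)))" by simp
    also have "\<dots> = M_s1 (Y g)" using YX triv_Ms1[OF lam Yg] by blast
    finally show ?thesis .
  qed
  have Ycomm2: "Y (M_s2 g) = M_s2 (Y g)" if g: "g \<in> Asign lam" for g
  proof -
    have Yg: "Y g \<in> Atriv lam" using Yin g by blast
    have "X (M_s2 (Y g)) = M_s2 (X (Y g))" using c2 Yg by blast
    also have "\<dots> = M_s2 g" using XY g by simp
    finally have "Y (M_s2 g) = Y (X (M_s2 (Y g)))" by simp
    also have "\<dots> = M_s2 (Y g)" using YX triv_Ms2[OF lam Yg] by blast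
    finally show ?thesis .
  qed
  have PS: "\<And>n. Pn n \<in> Asign lam" using Pn_sign[OF lam] by blast
  define h where "h = Y (Pn 0)"
  have hT: "h \<in> Atriv lam" using Yin PS by (simp add: h_def)
  obtain c where c: "is_coeff lam h c" using triv_D(1)[OF hT] unfolding Aspace_iff by blast
  have c0: "c (0,0) \<noteq> 0"
  proof
    assume c0: "c (0,0) = 0"
    obtain f1 f2 where f1: "f1 \<in> Atriv lam" and f2: "f2 \<in> Atriv lam" and hf: "h = (\<lambda>z. M_s1 f1 z + M_s2 f2 z)"
      using division[OF lam hT c c0] by blast
    have "X h = (\<lambda>z. X (M_s1 f1) z + X (M_s2 f2) z)"
      unfolding hf by (rule Xadd[OF triv_Ms1[OF lam f1] triv_Ms2[OF lam f2]])
    also have "\<dots> = (\<lambda>z. M_s1 (X f1) z + M_s2 (X f2) z)" using c1 c2 f1 f2 by simp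
    finally have Xh: "X h = (\<lambda>z. M_s1 (X f1) z + M_s2 (X f2) z)" .
    have Xh2: "X h = Pn 0" using XY PS by (simp add: h_def)
    have u1: "X f1 \<in> Asign lam" using Xin f1 by blast
    have v1: "X f2 \<in> Asign lam" using Xin f2 by blast
    obtain u where u: "is_coeff lam (X f1) u" using sign_D(1)[OF u1] unfolding Aspace_iff by blast
    obtain v where v: "is_coeff lam (X f2) v" using sign_D(1)[OF v1] unfolding Aspace_iff by blast
    have "X f1 (0,0) = - X f1 (0,0)" by (rule sign_D(2)[OF u1])
    then have "X f1 (0,0) = 0" by simp
    then have u0: "u (0,0) = 0" using coeff_at0[OF u] by simp
    have "is_coeff lam (\<lambda>z. M_s1 (X f1) z + M_s2 (X f2) z) (\<lambda>k. (sh 1 0 u k + sh 0 1 u k) + sh 1 1 v k)"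
      by (rule coeff_add[OF coeff_Ms1[OF lam u] coeff_Ms2[OF lam v]])
    then have "is_coeff lam (Pn 0) (\<lambda>k. (sh 1 0 u k + sh 0 1 u k) + sh 1 1 v k)" using Xh Xh2 by simp
    moreover have "is_coeff lam (Pn 0) (pf 0)" by (rule coeff_Pn[OF lam])
    ultimately have "(\<lambda>k. (sh 1 0 u k + sh 0 1 u k) + sh 1 1 v k) = pf 0" by (rule coeff_unique)
    then have "(sh 1 0 u (1,0) + sh 0 1 u (1,0)) + sh 1 1 v (1,0) = pf 0 (1,0)" by (rule fun_cong)
    then show False using u0 by (simp add: sh_def pf_eq)
  qed
  define Q where "Q n = Y (Pn n)" for n
  have Qrec: "Q (Suc (Suc n)) = (\<lambda>z. M_s1 (Q (Suc n)) z + (-1) * M_s2 (Q n) z)" for n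
  proof -
    have A: "M_s1 (Pn (Suc n)) \<in> Asign lam" by (rule sign_Ms1[OF lam PS])
    have B0: "M_s2 (Pn n) \<in> Asign lam" by (rule sign_Ms2[OF lam PS])
    have B: "(\<lambda>z. (-1) * M_s2 (Pn n) z) \<in> Asign lam" by (rule sign_scale[OF B0])
    have "Q (Suc (Suc n)) = Y (\<lambda>z. M_s1 (Pn (Suc n)) z + (\<lambda>z. (-1) * M_s2 (Pn n) z) z)"
      by (simp add: Q_def Pn_rec)
    also have "\<dots> = (\<lambda>z. Y (M_s1 (Pn (Suc n))) z + Y (\<lambda>z. (-1) * M_s2 (Pn n) z) z)"
      by (rule Yadd[OF A B])
    also have "\<dots> = (\<lambda>z. M_s1 (Q (Suc n)) z + (-1) * M_s2 (Q n) z)"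
      using Yscale[OF B0, of "-1"] Ycomm1[OF PS] Ycomm2[OF PS] by (simp add: Q_def)
    finally show ?thesis .
  qed
  have Q1: "Q (Suc 0) = M_s1 h" using Ycomm1[OF PS] by (simp add: Q_def h_def Pn_1)
  have Qc2: "is_coeff lam (Q n) (fam c n) \<and> is_coeff lam (Q (Suc n)) (fam c (Suc n))" for n
  proof (induction n)
    case 0
    have "is_coeff lam (Q 0) (fam c 0)" using c by (simp add: Q_def h_def)
    moreover have "is_coeff lam (Q (Suc 0)) (fam c (Suc 0))" using coeff_Ms1[OF lam c] by (simp add: Q1)
    ultimately show ?case by simp
  next
    case (Suc n)
    have "is_coeff lam (\<lambda>z. M_s1 (Q (Suc n)) z + (\<lambda>z. (-1) * M_s2 (Q n) z) z)
        (\<lambda>k. (sh 1 0 (fam c (Suc n)) k + sh 0 1 (fam c (Suc n)) k) + (\<lambda>k. (-1) * sh 1 1 (fam c n) k) k)"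
      by (rule coeff_add[OF coeff_Ms1[OF lam] coeff_scale[OF coeff_Ms2[OF lam]]]) (use Suc.IH in auto)
    then have "is_coeff lam (Q (Suc (Suc n))) (fam c (Suc (Suc n)))" by (simp add: Qrec)
    then show ?case using Suc.IH by simp
  qed
  have Qc: "is_coeff lam (Q n) (fam c n)" for n using Qc2 by blast
  have ineq: "(cmod (c (0,0)))\<^sup>2 * (\<Sum>k\<le>n. wt lam (k, n-k)) \<le> C\<^sup>2 * (wt lam (n+1,0) + wt lam (0,n+1))" for n
  proof -
    define IQ where "IQ = infsum (\<lambda>k. wt lam k * (cmod (fam c n k))\<^sup>2) UNIV"
    define IP where "IP = wt lam (n+1,0) + wt lam (0,n+1)"
    have hQ: "hnorm lam (Q n) = sqrt IQ" using hnorm_eq[OF Qc] by (simp add: IQ_def)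
    have hP: "hnorm lam (Pn n) = sqrt IP" using hnorm_eq[OF coeff_Pn[OF lam]] pf_norm by (simp add: IP_def)
    have le: "sqrt IQ \<le> C * sqrt IP" using C[OF PS[of n]] hQ hP by (simp add: Q_def)
    have IQ0: "0 \<le> IQ" unfolding IQ_def by (rule infsum_nonneg) (use wt_pos[OF lam] in \<open>simp add: less_imp_le\<close>)
    have IP0: "0 \<le> IP" unfolding IP_def using wt_pos[OF lam] by (simp add: less_imp_le add_nonneg_nonneg)
    have "IQ = (sqrt IQ)\<^sup>2" using IQ0 by simp
    also have "\<dots> \<le> (C * sqrt IP)\<^sup>2" using le by (intro power_mono) (simp_all add: IQ0)
    also have "\<dots> = C\<^sup>2 * IP" using IP0 by (simp add: power_mult_distrib)
    finally have up: "IQ \<le> C\<^sup>2 * IP" .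
    have inj: "inj_on (\<lambda>k. (k, n-k)) {..n}" by (auto simp: inj_on_def)
    have "(\<Sum>k\<le>n. wt lam (k, n-k) * (cmod (c (0,0)))\<^sup>2) = (\<Sum>k\<le>n. wt lam (k, n-k) * (cmod (fam c n (k, n-k)))\<^sup>2)"
      by (intro sum.cong) (auto simp: fam_diag)
    also have "\<dots> = sum (\<lambda>k. wt lam k * (cmod (fam c n k))\<^sup>2) ((\<lambda>k. (k, n-k)) ` {..n})"
      by (simp add: sum.reindex[OF inj])
    also have "\<dots> \<le> IQ" unfolding IQ_def
      by (rule finite_sum_le_infsum) (use coeff_wsum[OF Qc[of n]] wt_pos[OF lam] in \<open>auto simp: wsum_def less_imp_le\<close>)
    finally have lo: "(\<Sum>k\<le>n. wt lam (k, n-k) * (cmod (c (0,0)))\<^sup>2) \<le> IQ" .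
    have "(cmod (c (0,0)))\<^sup>2 * (\<Sum>k\<le>n. wt lam (k, n-k)) = (\<Sum>k\<le>n. wt lam (k, n-k) * (cmod (c (0,0)))\<^sup>2)"
      by (simp add: sum_distrib_left mult.commute)
    then show ?thesis using lo up by (simp add: IP_def)
  qed
  have pos: "0 < (cmod (c (0,0)))\<^sup>2" using c0 by simp
  show False by (rule final_contra[OF lam pos ineq])
qed

end
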